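(* Let $c\in\mathbb{Z}_{\ge1}$ and $\beta\in[0,1]$. If $\varphi(x)=\beta x+(1-\beta)\min(x,c)$, then \[ \alpha_\varphi=1-(1-\beta)\frac{c^c e^{-c}}{c!}. \]
   Context: $\alpha_\varphi=\inf_{x\in\mathbb{Z}_{\ge1}}\frac{\mathbb{E}_{X\sim\mathrm{Pois}(x)}[\varphi(X)]}{\varphi(x)}$. *)

theory Defs
  imports "HOL-Probability.Probability"
begin

definition alpha_phi :: "(real \<Rightarrow> real) \<Rightarrow> real" where
  "alpha_phi \<phi> = (INF x \<in> {1::nat..}.
      measure_pmf.expectation (poisson_pmf (real x)) (\<lambda>k. \<phi> (real k)) / \<phi> (real x))"

end

theory Submission
  imports Defs
begin

definition QQ :: "nat \<Rightarrow> real \<Rightarrow> real" where "QQ c t = (\<Sum>k<c. t^k / fact k)"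
definition GG :: "nat \<Rightarrow> real \<Rightarrow> real" where "GG c t = (\<Sum>k<c. real (c-k) * t^k / fact k)"

lemma fact_Suc_cancel: "real (Suc c) * y / fact (Suc c) = (y::real) / fact c"
  by (simp only: fact_Suc of_nat_mult) (simp add: divide_simps del: of_nat_Suc)

lemma GG_Suc: "GG (Suc c) t = GG c t + QQ (Suc c) t"
proof -
  have "GG (Suc c) t = (\<Sum>k<c. real (Suc c-k) * t^k / fact k) + t^c/fact c"
    by (simp add: GG_def)
  also have "(\<Sum>k<c. real (Suc c-k) * t^k / fact k) = (\<Sum>k<c. real (c-k) * t^k / fact k + t^k/fact k)"
  proof (rule sum.cong)
    fix k assume "k \<in> {..<c}"
    then have "Suc c - k = Suc (c - k)" by auto
    then show "real (Suc c-k) * t^k / fact k = real (c-k) * t^k / fact k + t^k/fact k"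
      by (simp only: of_nat_Suc distrib_right add_divide_distrib mult_1_left)
  qed simp
  finally show ?thesis by (simp add: GG_def QQ_def sum.distrib)
qed

lemma QQ_deriv: "((\<lambda>t. exp(-t) * QQ (Suc c) t) has_real_derivative (- exp(-t) * t^c / fact c)) (at t)"
proof (induction c)
  case 0
  show ?case by (simp add: QQ_def) (auto intro!: derivative_eq_intros)
next
  case (Suc c)
  have eq: "(\<lambda>t. exp(-t) * QQ (Suc (Suc c)) t) = (\<lambda>t. exp(-t) * QQ (Suc c) t + exp(-t) * (t^(Suc c) / fact (Suc c)))"
    unfolding QQ_def by (simp only: sum.lessThan_Suc distrib_left)
  have d: "((\<lambda>t. exp(-t) * (t^(Suc c) / fact (Suc c))) has_real_derivative
      (- exp(-t) * (t^(Suc c) / fact (Suc c)) + exp(-t) * (real (Suc c) * t^c / fact (Suc c)))) (at (t::real))"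
  proof -
    have em: "((\<lambda>t. exp(-t)) has_real_derivative -exp(-t)) (at t)" by (auto intro!: derivative_eq_intros)
    have "((\<lambda>t. exp(-t) * t^(Suc c)) has_real_derivative
      (- (exp(-t) * t^(Suc c)) + real (Suc c) * t^c * exp(-t))) (at t)"
      using DERIV_mult[OF em DERIV_pow[of "Suc c" t]] by (simp only: diff_Suc_Suc minus_nat.diff_0 mult_minus_left)
    note D = DERIV_cdivide[OF this, of "fact (Suc c)"]
    have e1: "(\<lambda>t::real. exp(-t) * (t^(Suc c)/fact(Suc c))) = (\<lambda>t::real. exp(-t)*t^(Suc c) / fact (Suc c))" by auto
    have e2: "(- exp(-t) * (t^(Suc c) / fact (Suc c)) + exp(-t) * (real (Suc c) * t^c / fact (Suc c)))
        = (- (exp(-t) * t^(Suc c)) + real (Suc c) * t^c * exp(-t)) / fact (Suc c)"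
      by (simp only: add_divide_distrib times_divide_eq_right mult_minus_left mult.commute[of "exp(-t)" "real (Suc c) * t^c"])
    show ?thesis unfolding e1 e2 by (rule D)
  qed
  have f: "exp(-t) * (real (Suc c) * t^c / fact (Suc c)) = exp(-t) * t^c / fact c"
    using fact_Suc_cancel[of c "t^c"] by (simp only: times_divide_eq_right mult.left_commute[of "exp(-t)"])
  have sumeq: "- exp(-t) * t^c / fact c + (- exp(-t) * (t^(Suc c) / fact (Suc c)) + exp(-t) * (real (Suc c) * t^c / fact (Suc c)))
     = - exp(-t) * t^(Suc c) / fact (Suc c)"
    unfolding f by simp
  have DA: "((\<lambda>t. exp(-t) * QQ (Suc c) t + exp(-t) * (t^(Suc c) / fact (Suc c))) has_real_derivative
     (- exp(-t) * t^c / fact c + (- exp(-t) * (t^(Suc c) / fact (Suc c)) + exp(-t) * (real (Suc c) * t^c / fact (Suc c))))) (at t)"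
    by (rule DERIV_add[OF Suc d])
  show ?case unfolding eq using DA[unfolded sumeq] .
qed

lemma GG_deriv: "((\<lambda>t. exp(-t) * GG c t) has_real_derivative (- exp(-t) * QQ c t)) (at t)"
proof (induction c)
  case 0
  show ?case by (simp add: QQ_def GG_def)
next
  case (Suc c)
  have "- exp (- t) * QQ c t + - exp (- t) * t ^ c / fact c = - exp(-t) * QQ (Suc c) t"
    by (simp add: QQ_def algebra_simps)
  with DERIV_add[OF Suc QQ_deriv[of c t]] show ?case
    by (simp add: GG_Suc distrib_left)
qed

lemma tele: "(\<Sum>k<n. (t - real k) * t^k / fact k) = real n * t^n / fact n"
proof (induction n)
  case (Suc n)
  have "real n * t ^ n / fact n + (t - real n) * t ^ n / fact n = t * t^n / fact n"
    by (simp add: diff_divide_distrib add_divide_distrib left_diff_distrib)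
  also have "\<dots> = real (Suc n) * t ^ Suc n / fact (Suc n)"
    using fact_Suc_cancel[of n "t ^ Suc n"] by simp
  finally show ?case using Suc by simp
qed simp

lemma GG_c: "GG c (real c) = real c * real c ^ c / fact c"
proof -
  have "GG c (real c) = (\<Sum>k<c. (real c - real k) * real c^k / fact k)"
    unfolding GG_def by (rule sum.cong) (auto simp: of_nat_diff)
  then show ?thesis by (simp add: tele)
qed

lemma GG_0: "GG c 0 = real c"
proof (induction c)
  case (Suc c)
  have "QQ (Suc c) 0 = 1" unfolding QQ_def by (simp add: sum.lessThan_Suc_shift del: sum.lessThan_Suc)
  then show ?case using Suc by (simp add: GG_Suc)
qed (simp add: GG_def)

lemma fact_aux: "(fact n::real) + fact n * real n \<noteq> 0"
  by (metis add_pos_nonneg fact_gt_zero less_irrefl mult_nonneg_nonneg of_nat_0_le_iff fact_ge_zero)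

lemma pois_exp:
  fixes c :: nat and \<beta> x :: real and \<phi> :: "real \<Rightarrow> real"
  assumes x: "x > 0" and b: "0 \<le> \<beta>" "\<beta> \<le> 1"
    and phi: "\<And>x. \<phi> x = \<beta> * x + (1 - \<beta>) * min x (real c)"
  shows "measure_pmf.expectation (poisson_pmf x) (\<lambda>k. \<phi> (real k))
     = \<beta> * x + (1 - \<beta>) * (real c - exp (-x) * GG c x)"
proof -
  define p where "p k = x^k / fact k * exp (-x)" for k :: nat
  have pp: "pmf (poisson_pmf x) k = p k" for k using x by (simp add: p_def)
  define h where "h k = (if k < c then real (c - k) else 0)" for k :: nat
  have s1: "p sums 1"
  proof -
    have "(\<lambda>n. x^n / fact n * exp(-x)) sums (exp x * exp (-x))"
      using exp_converges[of x] by (intro sums_mult2) (simp add: divide_inverse mult.commute)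
    then have "(\<lambda>n. x^n / fact n * exp(-x)) sums 1" by (simp only: mult_exp_exp) simp
    then show ?thesis unfolding p_def[abs_def] .
  qed
  have s2: "(\<lambda>k. p k * real k) sums x"
  proof -
    have "(\<lambda>n. p (Suc n) * real (Suc n)) = (\<lambda>n. x * p n)"
      by (auto simp: p_def fun_eq_iff field_simps fact_aux)
    moreover have "(\<lambda>n. x * p n) sums (x * 1)" by (intro sums_mult s1)
    ultimately have "(\<lambda>n. p (Suc n) * real (Suc n)) sums x" by simp
    then show ?thesis unfolding sums_Suc_iff[of "\<lambda>k. p k * real k"] by simp
  qed
  have s3: "(\<lambda>k. p k * h k) sums (\<Sum>k<c. p k * h k)"
    by (rule sums_finite) (auto simp: h_def)
  have s3': "(\<Sum>k<c. p k * h k) = exp (-x) * GG c x"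
    unfolding GG_def sum_distrib_left by (rule sum.cong) (auto simp: p_def h_def)
  have phik: "\<phi> (real k) = \<beta> * real k + (1 - \<beta>) * real c - (1 - \<beta>) * h k" for k
    by (auto simp: phi h_def of_nat_diff min_def algebra_simps)
  have S: "(\<lambda>k. p k * \<phi> (real k)) sums (\<beta> * x + (1 - \<beta>) * real c * 1 - (1 - \<beta>) * (exp (-x) * GG c x))"
  proof -
    have "(\<lambda>k. \<beta> * (p k * real k) + (1 - \<beta>) * real c * p k - (1 - \<beta>) * (p k * h k)) sums
       (\<beta> * x + (1 - \<beta>) * real c * 1 - (1 - \<beta>) * (exp (-x) * GG c x))"
      using s1 s2 s3 unfolding s3' by (intro sums_diff sums_add sums_mult) auto
    moreover have "(\<lambda>k. \<beta> * (p k * real k) + (1 - \<beta>) * real c * p k - (1 - \<beta>) * (p k * h k)) = (\<lambda>k. p k * \<phi> (real k))"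
      by (auto simp: phik fun_eq_iff algebra_simps)
    ultimately show ?thesis by simp
  qed
  have nn: "p k * \<phi> (real k) \<ge> 0" for k
    using b x by (auto simp: p_def phi intro!: mult_nonneg_nonneg add_nonneg_nonneg)
  have "measure_pmf.expectation (poisson_pmf x) (\<lambda>k. \<phi> (real k)) =
        (\<integral>k. pmf (poisson_pmf x) k * \<phi> (real k) \<partial>count_space UNIV)"
    unfolding measure_pmf_eq_density by (subst integral_density) auto
  also have "\<dots> = (\<integral>k. p k * \<phi> (real k) \<partial>count_space UNIV)" by (simp add: pp)
  also have "integrable (count_space UNIV) (\<lambda>k. p k * \<phi> (real k))"
    using S nn unfolding integrable_count_space_nat_iff by (simp add: sums_iff)
  hence "(\<integral>k. p k * \<phi> (real k) \<partial>count_space UNIV) = (\<beta> * x + (1 - \<beta>) * real c * 1 - (1 - \<beta>) * (exp (-x) * GG c x))"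
    using S by (subst integral_count_space_nat) (simp_all add: sums_iff)
  finally show ?thesis by (simp add: algebra_simps)
qed



theorem mainTheorem11:
  fixes c :: nat and \<beta> :: real and \<phi> :: "real \<Rightarrow> real"
  assumes "c \<ge> 1"
    and "0 \<le> \<beta>" and "\<beta> \<le> 1"
    and "\<And>x. \<phi> x = \<beta> * x + (1 - \<beta>) * min x (real c)"
  shows "alpha_phi \<phi> = 1 - (1 - \<beta>) * (real c ^ c * exp (- real c) / fact c)"
proof -
  note c1 = assms(1) and b = assms(2,3) and phi = assms(4)
  define p where "p = real c ^ c * exp (- real c) / fact c"
  define T where "T = 1 - (1 - \<beta>) * p"
  define g where "g t = exp (-t) * GG c t" for t
  define r where "r n = measure_pmf.expectation (poisson_pmf (real n)) (\<lambda>k. \<phi> (real k)) / \<phi> (real n)" for n :: nat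
  have p0: "p \<ge> 0" by (simp add: p_def)
  have gc: "g (real c) = real c * p"
    by (simp add: g_def p_def GG_c)
  have g0: "g 0 = real c" by (simp add: g_def GG_0)
  have QQnn: "QQ c t \<ge> 0" if "t \<ge> 0" for t
    unfolding QQ_def using that by (intro sum_nonneg) auto
  have gd: "(g has_real_derivative (- exp(-t) * QQ c t)) (at t)" for t
    unfolding g_def[abs_def] by (rule GG_deriv)
  have gdd: "((\<lambda>t. - exp(-t) * QQ c t) has_real_derivative (exp(-t) * t^(c-1) / fact (c-1))) (at t)" for t
  proof -
    have "Suc (c - 1) = c" using c1 by simp
    then have "((\<lambda>t. exp(-t) * QQ c t) has_real_derivative (- exp(-t) * t^(c-1) / fact (c-1))) (at t)"
      using QQ_deriv[of "c-1" t] by simp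
    from DERIV_minus[OF this] show ?thesis by simp
  qed
  have conv: "convex_on {0..} g"
    by (rule f''_ge0_imp_convex[OF _ gd gdd]) auto
  have key: "real c - g (real n) \<ge> min (real n) (real c) * (1 - p)" if "n \<ge> 1" for n :: nat
  proof (cases "n \<le> c")
    case True
    define u where "u = real n / real c"
    have u: "0 \<le> u" "u \<le> 1" using True c1 by (auto simp: u_def)
    have "g ((1 - u) *\<^sub>R 0 + u *\<^sub>R real c) \<le> (1 - u) * g 0 + u * g (real c)"
      using convex_onD[OF conv u, of 0 "real c"] by simp
    moreover have "(1 - u) *\<^sub>R 0 + u *\<^sub>R real c = real n" using c1 by (simp add: u_def)
    moreover have "u * real c = real n" using c1 by (simp add: u_def)
    ultimately have "g (real n) \<le> real c - real n + real n * p"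
      unfolding g0 gc by (simp add: algebra_simps)
    then show ?thesis using True by (simp add: algebra_simps)
  next
    case False
    have "g (real c) \<ge> g (real n)"
    proof (rule DERIV_nonpos_imp_nonincreasing[where f = g])
      show "real c \<le> real n" using False by simp
      fix t assume "real c \<le> t" "t \<le> real n"
      then have t0: "t \<ge> 0" by (meson of_nat_0_le_iff order_trans)
      show "\<exists>y. DERIV g t :> y \<and> y \<le> 0"
        using gd[of t] QQnn[OF t0] by (intro exI[of _ "- exp(-t) * QQ c t"]) simp
    qed
    then show ?thesis using False gc by (simp add: algebra_simps)
  qed
  have Er: "measure_pmf.expectation (poisson_pmf (real n)) (\<lambda>k. \<phi> (real k)) = \<beta> * real n + (1 - \<beta>) * (real c - g (real n))"
    if "n \<ge> 1" for n :: nat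
    using pois_exp[of "real n" \<beta> \<phi> c] that b phi by (simp add: g_def)
  have lb: "T \<le> r n" if n: "n \<ge> 1" for n :: nat
  proof -
    define m where "m = min (real n) (real c)"
    define D where "D = \<beta> * real n + (1 - \<beta>) * m"
    have m1: "m \<ge> 1" using n c1 by (simp add: m_def)
    have nm: "real n \<ge> m" by (simp add: m_def)
    have "\<beta> * (real n - m) \<ge> 0" using nm b by simp
    moreover have "D = m + \<beta> * (real n - m)" by (simp add: D_def algebra_simps)
    ultimately have Dm: "D \<ge> m" by linarith
    have Dpos: "D > 0" using Dm m1 by simp
    have "(1 - \<beta>) * (real c - g (real n)) \<ge> (1 - \<beta>) * (m * (1 - p))"
      using key[OF n] b unfolding m_def by (intro mult_left_mono) auto
    moreover have "(1 - \<beta>) * p * (D - m) \<ge> 0" using b p0 Dm by simp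
    moreover have "(1 - \<beta>) * (m * (1 - p)) = (1 - \<beta>) * m - (1 - \<beta>) * p * m" by (simp add: algebra_simps)
    moreover have "(1 - \<beta>) * p * (D - m) = (1 - \<beta>) * p * D - (1 - \<beta>) * p * m" by (simp add: algebra_simps)
    moreover have "T * D = D - (1 - \<beta>) * p * D" by (simp add: T_def algebra_simps)
    moreover have "D = \<beta> * real n + (1 - \<beta>) * m" by (simp add: D_def)
    ultimately have "T * D \<le> \<beta> * real n + (1 - \<beta>) * (real c - g (real n))"
      by linarith
    then show ?thesis using Dpos unfolding r_def Er[OF n]
      by (simp add: pos_le_divide_eq phi D_def m_def)
  qed
  have rc: "r c = T"
  proof -
    have phic: "\<phi> (real c) = real c" by (simp add: phi algebra_simps)
    have "r c = (\<beta> * real c + (1 - \<beta>) * (real c - real c * p)) / real c"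
      unfolding r_def Er[OF c1] gc using phic by simp
    also have "\<dots> = T" using c1 by (simp add: T_def field_simps)
    finally show ?thesis .
  qed
  have "alpha_phi \<phi> = (INF n \<in> {1::nat..}. r n)" unfolding alpha_phi_def r_def by simp
  also have "\<dots> = T"
  proof (rule antisym)
    show "(INF n \<in> {1::nat..}. r n) \<le> T"
    proof -
      have "bdd_below (r ` {1::nat..})" by (rule bdd_belowI2[of _ T]) (use lb in auto)
      then show ?thesis unfolding rc[symmetric] by (rule cINF_lower) (use c1 in auto)
    qed
    show "T \<le> (INF n \<in> {1::nat..}. r n)"
      by (rule cINF_greatest) (use lb in auto)
  qed
  finally show ?thesis by (simp add: T_def p_def)
qed

end
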